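(* Let $\Gamma=(V,E)$ be a finite vertex-transitive graph admitting an extended irregular dominating set $S$. Then for every vertex $u\in V$ there exists a unique vertex $v\in S$ covering $u$.
   Context: Let $\Gamma=(V,E)$ be a finite simple undirected graph with graph distance $d$. A vertex $v$ carrying a non-negative integer label $\ell$ dominates (covers) exactly the vertices $u$ with $d(u,v)=\ell$; a vertex labeled $0$ dominates only itself. An extended irregular dominating set is a set $S\subseteq V$ together with a labeling $\lambda:S\to\mathbb{Z}_{\ge 0}$ with distinct labels on distinct vertices, such that every vertex of $V$ is dominated by at least one vertex of $S$; it is assumed that some vertex of $S$ has label $0$. *)

theory Defs
  imports Main "HOL-Library.Extended_Nat"
begin

definition simple_graph :: "'a set \<Rightarrow> ('a \<Rightarrow> 'a \<Rightarrow> bool) \<Rightarrow> bool" where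
  "simple_graph V E \<longleftrightarrow> finite V
     \<and> (\<forall>u v. E u v \<longrightarrow> u \<in> V \<and> v \<in> V)
     \<and> (\<forall>u v. E u v \<longrightarrow> E v u)
     \<and> (\<forall>u. \<not> E u u)"

definition gdist :: "('a \<Rightarrow> 'a \<Rightarrow> bool) \<Rightarrow> 'a \<Rightarrow> 'a \<Rightarrow> enat" where
  "gdist E u v =
     (if \<exists>n. (u, v) \<in> {(x, y). E x y} ^^ n
      then enat (LEAST n. (u, v) \<in> {(x, y). E x y} ^^ n)
      else \<infinity>)"

definition graph_automorphism :: "'a set \<Rightarrow> ('a \<Rightarrow> 'a \<Rightarrow> bool) \<Rightarrow> ('a \<Rightarrow> 'a) \<Rightarrow> bool" where
  "graph_automorphism V E f \<longleftrightarrow> bij_betw f V V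
     \<and> (\<forall>u\<in>V. \<forall>v\<in>V. E u v \<longleftrightarrow> E (f u) (f v))"

definition vertex_transitive :: "'a set \<Rightarrow> ('a \<Rightarrow> 'a \<Rightarrow> bool) \<Rightarrow> bool" where
  "vertex_transitive V E \<longleftrightarrow>
     (\<forall>u\<in>V. \<forall>v\<in>V. \<exists>f. graph_automorphism V E f \<and> f u = v)"

definition dominates :: "('a \<Rightarrow> 'a \<Rightarrow> bool) \<Rightarrow> 'a \<Rightarrow> nat \<Rightarrow> 'a \<Rightarrow> bool" where
  "dominates E v l u \<longleftrightarrow> gdist E u v = enat l"

definition ext_irregular_dominating_set ::
  "'a set \<Rightarrow> ('a \<Rightarrow> 'a \<Rightarrow> bool) \<Rightarrow> 'a set \<Rightarrow> ('a \<Rightarrow> nat) \<Rightarrow> bool" where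
  "ext_irregular_dominating_set V E S lab \<longleftrightarrow>
     S \<subseteq> V
     \<and> inj_on lab S
     \<and> (\<forall>u\<in>V. \<exists>v\<in>S. dominates E v (lab v) u)
     \<and> (\<exists>v\<in>S. lab v = 0)"

end

theory Submission
  imports Defs
begin

lemma relpow_fwd:
  assumes sg: "simple_graph V E" and aut: "graph_automorphism V E f" and u: "u \<in> V"
  shows "(u,v) \<in> {(x,y). E x y} ^^ n \<Longrightarrow> v \<in> V \<and> (f u, f v) \<in> {(x,y). E x y} ^^ n"
proof (induction n arbitrary: v)
  case 0
  then show ?case using u by simp
next
  case (Suc n)
  then obtain y where y: "(u,y) \<in> {(x,y). E x y} ^^ n" "E y v" by auto
  from Suc.IH[OF y(1)] have "y \<in> V" "(f u, f y) \<in> {(x,y). E x y} ^^ n" by auto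
  moreover have "v \<in> V" using sg y(2) unfolding simple_graph_def by blast
  moreover have "E (f y) (f v)" using aut y(2) calculation unfolding graph_automorphism_def by blast
  ultimately show ?case by auto
qed

lemma relpow_bwd:
  assumes sg: "simple_graph V E" and aut: "graph_automorphism V E f" and u: "u \<in> V"
  shows "(f u, z) \<in> {(x,y). E x y} ^^ n \<Longrightarrow> \<exists>v\<in>V. z = f v \<and> (u,v) \<in> {(x,y). E x y} ^^ n"
proof (induction n arbitrary: z)
  case 0
  then show ?case using u by simp
next
  case (Suc n)
  then obtain y where y: "(f u,y) \<in> {(x,y). E x y} ^^ n" "E y z" by auto
  from Suc.IH[OF y(1)] obtain w where w: "w \<in> V" "y = f w" "(u,w) \<in> {(x,y). E x y} ^^ n" by auto
  have "z \<in> V" using sg y(2) unfolding simple_graph_def by blast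
  then obtain v where v: "v \<in> V" "z = f v" using aut unfolding graph_automorphism_def bij_betw_def by (metis imageE)
  have "E w v" using aut y(2) w v unfolding graph_automorphism_def by blast
  then show ?case using w v by auto
qed

lemma relpow_iff:
  assumes sg: "simple_graph V E" and aut: "graph_automorphism V E f" and u: "u \<in> V" and v: "v \<in> V"
  shows "(f u, f v) \<in> {(x,y). E x y} ^^ n \<longleftrightarrow> (u,v) \<in> {(x,y). E x y} ^^ n"
proof
  assume "(f u, f v) \<in> {(x,y). E x y} ^^ n"
  from relpow_bwd[OF sg aut u this] obtain w where "w \<in> V" "f v = f w" "(u,w) \<in> {(x,y). E x y} ^^ n" by auto
  moreover have "inj_on f V" using aut unfolding graph_automorphism_def bij_betw_def by auto
  ultimately show "(u,v) \<in> {(x,y). E x y} ^^ n" using v by (metis inj_onD)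
next
  assume "(u,v) \<in> {(x,y). E x y} ^^ n"
  then show "(f u, f v) \<in> {(x,y). E x y} ^^ n" using relpow_fwd[OF sg aut u] by blast
qed

lemma gdist_aut:
  assumes sg: "simple_graph V E" and aut: "graph_automorphism V E f" and u: "u \<in> V" and v: "v \<in> V"
  shows "gdist E (f u) (f v) = gdist E u v"
  unfolding gdist_def using relpow_iff[OF sg aut u v] by simp

definition sph :: "'a set \<Rightarrow> ('a \<Rightarrow> 'a \<Rightarrow> bool) \<Rightarrow> 'a \<Rightarrow> nat \<Rightarrow> 'a set" where
  "sph V E w l = {u\<in>V. gdist E u w = enat l}"

lemma sph_le:
  assumes sg: "simple_graph V E" and aut: "graph_automorphism V E f" and v: "v \<in> V"
  shows "card (sph V E v l) \<le> card (sph V E (f v) l)"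
proof -
  have inj: "inj_on f V" and im: "f ` V = V" using aut unfolding graph_automorphism_def bij_betw_def by auto
  have fin: "finite V" using sg unfolding simple_graph_def by auto
  have "f ` sph V E v l \<subseteq> sph V E (f v) l"
    unfolding sph_def using gdist_aut[OF sg aut _ v] im by auto
  moreover have "inj_on f (sph V E v l)" using inj unfolding sph_def by (auto intro: inj_on_subset)
  moreover have "finite (sph V E (f v) l)" using fin unfolding sph_def by auto
  ultimately show ?thesis
    by (metis card_image card_mono)
qed

lemma sph_eq:
  assumes sg: "simple_graph V E" and vt: "vertex_transitive V E" and v: "v \<in> V" and w: "w \<in> V"
  shows "card (sph V E v l) = card (sph V E w l)"
proof -
  obtain f where f: "graph_automorphism V E f" "f v = w" using vt v w unfolding vertex_transitive_def by blast
  obtain g where g: "graph_automorphism V E g" "g w = v" using vt v w unfolding vertex_transitive_def by blast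
  show ?thesis using sph_le[OF sg f(1) v, of l] sph_le[OF sg g(1) w, of l] f(2) g(2) by simp
qed

theorem theorem2p5:
  fixes V :: "'a set" and E :: "'a \<Rightarrow> 'a \<Rightarrow> bool"
    and S :: "'a set" and lab :: "'a \<Rightarrow> nat"
  assumes "simple_graph V E"
    and "vertex_transitive V E"
    and "ext_irregular_dominating_set V E S lab"
  shows "\<forall>u\<in>V. \<exists>!v. v \<in> S \<and> dominates E v (lab v) u"
proof -
  note sg = assms(1) and vt = assms(2)
  have SV: "S \<subseteq> V" and inj: "inj_on lab S" and cov: "\<forall>u\<in>V. \<exists>v\<in>S. dominates E v (lab v) u"
    and z: "\<exists>v\<in>S. lab v = 0"
    using assms(3) unfolding ext_irregular_dominating_set_def by auto
  have finV: "finite V" using sg unfolding simple_graph_def by auto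
  have finS: "finite S" using SV finV finite_subset by blast
  obtain w where wS: "w \<in> S" using z by blast
  have wV: "w \<in> V" using wS SV by auto
  define D where "D v = sph V E v (lab v)" for v
  have finD: "finite (D v)" for v unfolding D_def sph_def using finV by auto
  have "(\<Sum>v\<in>S. card (D v)) = (\<Sum>v\<in>S. card (sph V E w (lab v)))"
    unfolding D_def using sph_eq[OF sg vt _ wV] SV by (intro sum.cong) auto
  also have "\<dots> = (\<Sum>l\<in>lab ` S. card (sph V E w l))"
    using sum.reindex[OF inj, of "\<lambda>l. card (sph V E w l)"] by simp
  also have "\<dots> = card (\<Union>l\<in>lab ` S. sph V E w l)"
    by (rule card_UN_disjoint[symmetric]) (auto simp: sph_def finS intro: finite_subset[OF _ finV])
  also have "\<dots> \<le> card V"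
    by (rule card_mono[OF finV]) (auto simp: sph_def)
  finally have sumle: "(\<Sum>v\<in>S. card (D v)) \<le> card V" .
  have VU: "V \<subseteq> (\<Union>v\<in>S. D v)"
    using cov unfolding D_def sph_def dominates_def by auto
  show ?thesis
  proof
    fix u assume u: "u \<in> V"
    show "\<exists>!v. v \<in> S \<and> dominates E v (lab v) u"
    proof (rule ccontr)
      assume "\<not> ?thesis"
      then obtain v1 v2 where v: "v1 \<in> S" "v2 \<in> S" "v1 \<noteq> v2"
        "dominates E v1 (lab v1) u" "dominates E v2 (lab v2) u"
        using cov u by blast
      have uI: "u \<in> D v1 \<inter> D v2" using v u unfolding D_def sph_def dominates_def by auto
      have I1: "card (D v1 \<inter> D v2) \<ge> 1"
        using uI finD by (metis One_nat_def Suc_leI card_gt_0_iff empty_iff finite_Int)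
      have CU: "card (D v1 \<union> D v2) + card (D v1 \<inter> D v2) = card (D v1) + card (D v2)"
        using card_Un_Int[OF finD finD] by simp
      define R where "R = S - {v1, v2}"
      have "(\<Union>v\<in>S. D v) = (D v1 \<union> D v2) \<union> (\<Union>v\<in>R. D v)"
        unfolding R_def using v by auto
      hence "card (\<Union>v\<in>S. D v) \<le> card (D v1 \<union> D v2) + card (\<Union>v\<in>R. D v)"
        by (simp add: card_Un_le)
      also have "card (\<Union>v\<in>R. D v) \<le> (\<Sum>v\<in>R. card (D v))"
        by (rule card_UN_le) (simp add: R_def finS)
      finally have A: "card (\<Union>v\<in>S. D v) \<le> card (D v1 \<union> D v2) + (\<Sum>v\<in>R. card (D v))" by simp
      have "(\<Sum>v\<in>S. card (D v)) = card (D v1) + card (D v2) + (\<Sum>v\<in>R. card (D v))"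
      proof -
        have "(\<Sum>v\<in>S. card (D v)) = card (D v1) + (\<Sum>v\<in>S - {v1}. card (D v))"
          using sum.remove[OF finS v(1)] by simp
        also have "(\<Sum>v\<in>S - {v1}. card (D v)) = card (D v2) + (\<Sum>v\<in>S - {v1} - {v2}. card (D v))"
          using sum.remove[of "S - {v1}" v2] finS v by simp
        finally show ?thesis unfolding R_def by (simp add: Diff_insert2[symmetric] insert_commute)
      qed
      moreover have "card V \<le> card (\<Union>v\<in>S. D v)"
        by (rule card_mono[OF _ VU]) (simp add: finS finD)
      ultimately show False using A sumle CU I1 by linarith
    qed
  qed
qed

end
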